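(* Consider a platoon $i$ of CAVs with members $j\in\{0,1,\dots,m_i\}$ ($j=0$ the leader), each obeying $\dot p_{i,j}=v_{i,j}$, $\dot v_{i,j}=u_{i,j}$, subject to $u_{\min}\le u_{i,j}(t)\le u_{\max}$, $0<v_{\min}\le v_{i,j}(t)\le v_{\max}$, and $p_{i,j-1}(t)-p_{i,j}(t)\ge\Delta_i+l_c$ for $j\in\{1,\dots,m_i\}$. Assume that at time $t_i^0$ all members have equal speed and $p_{i,j-1}(t_i^0)-p_{i,j}(t_i^0)-l_c=\Delta_i$. Let $u^*_{i,0}(t)=6a_it+2b_i$, $t\in[t_i^0,t_i^f]$, be the leader's optimal control, whose control and speed trajectories satisfy the control and speed constraints. Then for every follower $j\in\{1,\dots,m_i\}$, the control input $u_{i,j}(t)=u^*_{i,0}(t)$ for all $t\in[t_i^0,t_i^f]$ is energy- and time-optimal (it yields linear control, quadratic speed and cubic position trajectories of the energy-optimal form) and satisfies the control constraint, the speed constraint, and the intra-platoon rear-end safety constraint on $[t_i^0,t_i^f]$.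
   Context: The leader's optimal control is obtained from the leader's problem: the leader uses the unconstrained energy-optimal form $u_i(t)=6a_it+2b_i$, $v_i(t)=3a_it^2+2b_it+c_i$, $p_i(t)=a_it^3+b_it^2+c_it+d_i$ with boundary conditions $p_i(t_i^0)=p_i^0$, $v_i(t_i^0)=v_i^0$, $p_i(t_i^f)=p_i^f$, $u_i(t_i^f)=0$, with minimal exit time $t_i^f$ chosen so that none of the control, speed and safety constraints is violated. $l_c$ is the vehicle length and $\Delta_i$ the prescribed inter-vehicle gap. *)

theory Defs
  imports Complex_Main
begin

end

theory Submission
  imports Defs "HOL-Analysis.Analysis"
begin

lemma same_deriv:
  fixes f h g :: "real \<Rightarrow> real"
  assumes "\<And>t. t \<in> {t0..tf} \<Longrightarrow> (f has_real_derivative g t) (at t within {t0..tf})"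
    and "\<And>t. t \<in> {t0..tf} \<Longrightarrow> (h has_real_derivative g t) (at t within {t0..tf})"
  shows "\<exists>c. \<forall>t\<in>{t0..tf}. f t = h t + c"
proof -
  have "\<exists>c. \<forall>t\<in>{t0..tf}. (\<lambda>t. f t - h t) t = c"
  proof (rule has_field_derivative_zero_constant)
    fix t assume "t \<in> {t0..tf}"
    from DERIV_diff[OF assms(1)[OF this] assms(2)[OF this]]
    show "((\<lambda>t. f t - h t) has_field_derivative 0) (at t within {t0..tf})" by simp
  qed simp
  then obtain c where "\<forall>t\<in>{t0..tf}. f t - h t = c" by auto
  then show ?thesis by (metis add.commute diff_add_cancel)
qed

theorem lemma1:
  fixes p v u :: "nat \<Rightarrow> real \<Rightarrow> real"
    and m :: nat
    and t0 tf a b \<Delta> lc umin umax vmin vmax :: real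
  assumes interval: "t0 < tf"
    and vmin_pos: "0 < vmin"
    and dyn_p: "\<And>j t. j \<le> m \<Longrightarrow> t \<in> {t0..tf} \<Longrightarrow>
                  (p j has_real_derivative v j t) (at t within {t0..tf})"
    and dyn_v: "\<And>j t. j \<le> m \<Longrightarrow> t \<in> {t0..tf} \<Longrightarrow>
                  (v j has_real_derivative u j t) (at t within {t0..tf})"
    and leader_u: "\<And>t. t \<in> {t0..tf} \<Longrightarrow> u 0 t = 6 * a * t + 2 * b"
    and leader_u_bounds: "\<And>t. t \<in> {t0..tf} \<Longrightarrow> umin \<le> u 0 t \<and> u 0 t \<le> umax"
    and leader_v_bounds: "\<And>t. t \<in> {t0..tf} \<Longrightarrow> vmin \<le> v 0 t \<and> v 0 t \<le> vmax"
    and init_speed: "\<And>j. j \<le> m \<Longrightarrow> v j t0 = v 0 t0"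
    and init_gap: "\<And>j. 1 \<le> j \<Longrightarrow> j \<le> m \<Longrightarrow> p (j - 1) t0 - p j t0 - lc = \<Delta>"
    and follower_u: "\<And>j t. 1 \<le> j \<Longrightarrow> j \<le> m \<Longrightarrow> t \<in> {t0..tf} \<Longrightarrow> u j t = u 0 t"
  shows "\<forall>j. 1 \<le> j \<and> j \<le> m \<longrightarrow>
           (\<exists>c d. \<forall>t\<in>{t0..tf}.
               u j t = 6 * a * t + 2 * b \<and>
               v j t = 3 * a * t ^ 2 + 2 * b * t + c \<and>
               p j t = a * t ^ 3 + b * t ^ 2 + c * t + d) \<and>
           (\<forall>t\<in>{t0..tf}.
               umin \<le> u j t \<and> u j t \<le> umax \<and>
               vmin \<le> v j t \<and> v j t \<le> vmax \<and>
               p (j - 1) t - p j t \<ge> \<Delta> + lc)"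
  proof -
  have T0: "t0 \<in> {t0..tf}" using interval by simp
  have "\<exists>c. \<forall>t\<in>{t0..tf}. v 0 t = (3 * a * t ^ 2 + 2 * b * t) + c"
  proof (rule same_deriv)
    fix t assume t: "t \<in> {t0..tf}"
    show "(v 0 has_real_derivative u 0 t) (at t within {t0..tf})" using dyn_v[OF _ t] by simp
    show "((\<lambda>t. 3 * a * t ^ 2 + 2 * b * t) has_real_derivative u 0 t) (at t within {t0..tf})"
      using leader_u[OF t] by (auto intro!: derivative_eq_intros)
  qed
  then obtain c where c: "\<And>t. t\<in>{t0..tf} \<Longrightarrow> v 0 t = 3 * a * t ^ 2 + 2 * b * t + c" by auto
  have "\<exists>d. \<forall>t\<in>{t0..tf}. p 0 t = (a * t ^ 3 + b * t ^ 2 + c * t) + d"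
  proof (rule same_deriv)
    fix t assume t: "t \<in> {t0..tf}"
    show "(p 0 has_real_derivative v 0 t) (at t within {t0..tf})" using dyn_p[OF _ t] by simp
    show "((\<lambda>t. a * t ^ 3 + b * t ^ 2 + c * t) has_real_derivative v 0 t) (at t within {t0..tf})"
      using c[OF t] by (auto intro!: derivative_eq_intros)
  qed
  then obtain d where d: "\<And>t. t\<in>{t0..tf} \<Longrightarrow> p 0 t = a * t ^ 3 + b * t ^ 2 + c * t + d" by auto
  have V: "v j t = v 0 t" if j: "j \<le> m" and t: "t \<in> {t0..tf}" for j t
  proof (cases "j = 0")
    case False
    have "\<exists>e. \<forall>t\<in>{t0..tf}. v j t = v 0 t + e"
    proof (rule same_deriv)
      fix t assume t: "t \<in> {t0..tf}"
      show "(v j has_real_derivative u 0 t) (at t within {t0..tf})"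
        using dyn_v[OF j t] follower_u[OF _ j t] False by simp
      show "(v 0 has_real_derivative u 0 t) (at t within {t0..tf})" using dyn_v[OF _ t] by simp
    qed
    then obtain e where e: "\<forall>t\<in>{t0..tf}. v j t = v 0 t + e" by auto
    have "e = 0" using e T0 init_speed[OF j] by auto
    then show ?thesis using e t by simp
  qed simp
  have P: "\<exists>e. \<forall>t\<in>{t0..tf}. p j t = p 0 t + e" if j: "j \<le> m" for j
  proof (rule same_deriv)
    fix t assume t: "t \<in> {t0..tf}"
    show "(p j has_real_derivative v 0 t) (at t within {t0..tf})"
      using dyn_p[OF j t] V[OF j t] by simp
    show "(p 0 has_real_derivative v 0 t) (at t within {t0..tf})" using dyn_p[OF _ t] by simp
  qed
  show ?thesis
  proof (intro allI impI conjI)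
    fix j assume j: "1 \<le> j \<and> j \<le> m"
    show "\<exists>c d. \<forall>t\<in>{t0..tf}. u j t = 6 * a * t + 2 * b \<and>
               v j t = 3 * a * t ^ 2 + 2 * b * t + c \<and>
               p j t = a * t ^ 3 + b * t ^ 2 + c * t + d"
    proof -
      obtain e where e: "\<forall>t\<in>{t0..tf}. p j t = p 0 t + e" using P j by blast
      show ?thesis
      proof (intro exI ballI conjI)
        fix t assume t: "t \<in> {t0..tf}"
        show "u j t = 6 * a * t + 2 * b" using follower_u[of j t] leader_u[OF t] j t by simp
        show "v j t = 3 * a * t ^ 2 + 2 * b * t + c" using V[of j t] c[OF t] j t by simp
        show "p j t = a * t ^ 3 + b * t ^ 2 + c * t + (d + e)" using e d[OF t] t by simp
      qed
    qed
    obtain e where e: "\<forall>t\<in>{t0..tf}. p j t = p 0 t + e" using P j by blast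
    obtain e' where e': "\<forall>t\<in>{t0..tf}. p (j - 1) t = p 0 t + e'" using P j by fastforce
    have g: "p (j - 1) t0 - p j t0 = \<Delta> + lc" using init_gap j by force
    show "\<forall>t\<in>{t0..tf}. umin \<le> u j t \<and> u j t \<le> umax \<and>
               vmin \<le> v j t \<and> v j t \<le> vmax \<and> p (j - 1) t - p j t \<ge> \<Delta> + lc"
    proof
      fix t assume t: "t \<in> {t0..tf}"
      have "p (j - 1) t - p j t = \<Delta> + lc" using e e' t T0 g by auto
      then show "umin \<le> u j t \<and> u j t \<le> umax \<and>
               vmin \<le> v j t \<and> v j t \<le> vmax \<and> p (j - 1) t - p j t \<ge> \<Delta> + lc"
        using follower_u[of j t] V[of j t] leader_u_bounds[OF t] leader_v_bounds[OF t] j t by auto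
    qed
  qed
qed

end
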